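(* Let $n$ be a positive integer and let $A(n)=(a_{ij})$, $p=p(n)$, $pp=pp(n)$, $b(n)$ be as in the context. Let $m\ge 1$ be an integer such that $\overline{p}=pm$ satisfies $\lfloor \overline{p}/2\rfloor> b(n)$, put $r=\lfloor\overline{p}/2\rfloor$, let $v$ be an integer with $v\ge pp+\overline{p}$, and let $B=(b_{ij})_{1\le i,j\le\overline{p}}$ be the $\overline{p}\times\overline{p}$ matrix with $b_{ij}=a_{v+i,v+j}$ if $i-r\le j\le i+r$; $b_{ij}=a_{v+i,v+j-\overline{p}}$ if $j>i+r$; $b_{ij}=a_{v+i,v+j+\overline{p}}$ if $j<i-r$. Then every column of $B$ contains exactly $n+1$ ones.
   Context: $\mathbb{N}=\{1,2,3,\dots\}$. Fix a positive integer $n$. The infinite $\{0,1\}$-matrix $A(n)=(a_{ij})_{i,j\in\mathbb{N}}$ is defined recursively. Its entries are determined row by row (row $1$ first), and within each row from left to right, so that $a_{kl}$ is determined after all $a_{ij}$ with $i<k$ and all $a_{kj}$ with $j<l$. One sets $a_{kl}=1$ if and only if all of the following hold: (1) $\sum_{j<l}a_{kj}<n+1$; (2) $\sum_{i<k}a_{il}<n+1$; (3) there is no pair $(i,j)$ with $1\le i<k$, $1\le j<l$ and $a_{ij}=a_{il}=a_{kj}=1$. Otherwise $a_{kl}=0$. The matrix $A(n)$ is eventually periodic along the diagonal: there exist $c\ge0$, $q\ge1$ with $a_{i+q,j+q}=a_{ij}$ for all $i>c$, $j\ge1$. The period $p=p(n)$ is the smallest $q\ge1$ for which such a $c$ exists,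 and the preperiod $pp=pp(n)$ is the smallest $c\ge 0$ with $a_{i+p,j+p}=a_{ij}$ for all $i>c$, $j\ge 1$. Define $b(n)=\max\{|j-i| : i,j\ge1,\ a_{ij}=1,\ i>pp(n)\}$. *)

theory Defs
  imports Main
begin

text \<open>The matrix A(n), 1-based indices; entries with a zero index are False (unused).
  Entry a_{kl} is computed from entries earlier in row-major order.\<close>

function amat :: "nat \<Rightarrow> nat \<Rightarrow> nat \<Rightarrow> bool" where
  "amat n k l =
     (if k = 0 \<or> l = 0 then False
      else (\<Sum>j\<in>{1..<l}. if amat n k j then (1::nat) else 0) < n + 1
         \<and> (\<Sum>i\<in>{1..<k}. if amat n i l then (1::nat) else 0) < n + 1
         \<and> \<not> (\<exists>i\<in>{1..<k}. \<exists>j\<in>{1..<l}. amat n i j \<and> amat n i l \<and> amat n k j))"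
  by auto
termination
  by (relation "measures [\<lambda>(n,k,l). k, \<lambda>(n,k,l). l]") auto

definition per :: "nat \<Rightarrow> nat" where
  "per n = (LEAST q. q \<ge> 1 \<and> (\<exists>c. \<forall>i>c. \<forall>j\<ge>1. amat n (i+q) (j+q) = amat n i j))"

definition preper :: "nat \<Rightarrow> nat" where
  "preper n = (LEAST c. \<forall>i>c. \<forall>j\<ge>1. amat n (i + per n) (j + per n) = amat n i j)"

definition bwidth :: "nat \<Rightarrow> int" where
  "bwidth n = Max {\<bar>int j - int i\<bar> | i j. i \<ge> 1 \<and> j \<ge> 1 \<and> amat n i j \<and> i > preper n}"

definition Bmat :: "nat \<Rightarrow> nat \<Rightarrow> nat \<Rightarrow> nat \<Rightarrow> nat \<Rightarrow> bool" where
  "Bmat n m v i j =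
     (let P = per n * m; r = P div 2 in
      if int i - int r \<le> int j \<and> j \<le> i + r then amat n (v+i) (v+j)
      else if j > i + r then amat n (v+i) (v+j-P)
      else amat n (v+i) (v+j+P))"

end

theory Submission
  imports Defs
begin

declare amat.simps[simp del]

definition rc :: "nat \<Rightarrow> nat \<Rightarrow> nat \<Rightarrow> nat" where
  "rc n k l = (\<Sum>j\<in>{1..<l}. if amat n k j then (1::nat) else 0)"
definition cc :: "nat \<Rightarrow> nat \<Rightarrow> nat \<Rightarrow> nat" where
  "cc n k l = (\<Sum>i\<in>{1..<k}. if amat n i l then (1::nat) else 0)"

lemma amat_eq: "amat n k l = (k \<noteq> 0 \<and> l \<noteq> 0 \<and> rc n k l < n + 1 \<and> cc n k l < n + 1
   \<and> \<not> (\<exists>i\<in>{1..<k}. \<exists>j\<in>{1..<l}. amat n i j \<and> amat n i l \<and> amat n k j))"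
  unfolding rc_def cc_def by (subst amat.simps) simp

lemma amat_pos: "amat n k l \<Longrightarrow> k \<ge> 1 \<and> l \<ge> 1"
  by (subst (asm) amat_eq) auto

lemma sum_ind_card: "finite A \<Longrightarrow> (\<Sum>j\<in>A. if P j then (1::nat) else 0) = card {j\<in>A. P j}"
  by (simp add: sum.If_cases Int_def conj_commute)

lemma rc_card: "rc n k l = card {j\<in>{1..<l}. amat n k j}"
  unfolding rc_def by (simp add: sum_ind_card)
lemma cc_card: "cc n k l = card {i\<in>{1..<k}. amat n i l}"
  unfolding cc_def by (simp add: sum_ind_card)

lemma rc_mono: "l \<le> l' \<Longrightarrow> rc n k l \<le> rc n k l'"
  unfolding rc_card by (rule card_mono) auto
lemma cc_mono: "k \<le> k' \<Longrightarrow> cc n k l \<le> cc n k' l"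
  unfolding cc_card by (rule card_mono) auto

lemma rc_Suc: "rc n k (Suc l) = rc n k l + (if amat n k l then 1 else 0)"
proof (cases "l = 0")
  case True thus ?thesis using amat_pos[of n k l] by (auto simp add: rc_def)
next
  case False
  hence "{1..<Suc l} = insert l {1..<l}" by auto
  thus ?thesis unfolding rc_def by simp
qed

lemma cc_Suc: "cc n (Suc k) l = cc n k l + (if amat n k l then 1 else 0)"
proof (cases "k = 0")
  case True thus ?thesis using amat_pos[of n k l] by (auto simp add: cc_def)
next
  case False
  hence "{1..<Suc k} = insert k {1..<k}" by auto
  thus ?thesis unfolding cc_def by simp
qed

lemma rc_le: "rc n k l \<le> n + 1"
proof (induction l)
  case 0 thus ?case by (simp add: rc_def)
next
  case (Suc l) thus ?case using amat_eq[of n k l] by (auto simp: rc_Suc)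
qed

lemma cc_le: "cc n k l \<le> n + 1"
proof (induction k)
  case 0 thus ?case by (simp add: cc_def)
next
  case (Suc k) thus ?case using amat_eq[of n k l] by (auto simp: cc_Suc)
qed

lemma fin_bound:
  fixes P :: "nat \<Rightarrow> bool"
  assumes pos: "\<And>x. P x \<Longrightarrow> x \<ge> 1" and b: "\<And>L. card {x\<in>{1..<L}. P x} \<le> N"
  shows "finite {x. P x} \<and> card {x. P x} \<le> N"
proof -
  have fin: "finite {x. P x}"
  proof (rule ccontr)
    assume "infinite {x. P x}"
    then obtain T where T: "T \<subseteq> {x. P x}" "finite T" "card T = N + 1"
      using infinite_arbitrarily_large by blast
    have "T \<subseteq> {x\<in>{1..<Suc (Max T)}. P x}"
      using T pos by (auto simp: less_Suc_eq_le Max_ge)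
    hence "card T \<le> card {x\<in>{1..<Suc (Max T)}. P x}" by (rule card_mono[rotated]) simp
    thus False using b[of "Suc (Max T)"] T by simp
  qed
  moreover have "card {x. P x} \<le> N"
  proof (cases "{x. P x} = {}")
    case True thus ?thesis by simp
  next
    case False
    have "{x. P x} \<subseteq> {x\<in>{1..<Suc (Max {x. P x})}. P x}"
      using fin pos by (auto simp: less_Suc_eq_le)
    hence "card {x. P x} \<le> card {x\<in>{1..<Suc (Max {x. P x})}. P x}" by (rule card_mono[rotated]) simp
    thus ?thesis using b by (meson order_trans)
  qed
  ultimately show ?thesis by blast
qed

lemma row_fin: "finite {l. amat n k l} \<and> card {l. amat n k l} \<le> n + 1"
proof (rule fin_bound)
  show "\<And>x. amat n k x \<Longrightarrow> 1 \<le> x" using amat_pos by blast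
  show "\<And>L. card {x \<in> {1..<L}. amat n k x} \<le> n + 1" using rc_le rc_card by metis
qed
lemma col_fin: "finite {k. amat n k l} \<and> card {k. amat n k l} \<le> n + 1"
proof (rule fin_bound)
  show "\<And>x. amat n x l \<Longrightarrow> 1 \<le> x" using amat_pos by blast
  show "\<And>L. card {x \<in> {1..<L}. amat n x l} \<le> n + 1" using cc_le cc_card by metis
qed



definition E :: "nat \<Rightarrow> nat" where "E n = (n+1)^3 + n + 1"

lemma card_UN_bound:
  assumes "finite I" "\<And>i. i \<in> I \<Longrightarrow> finite (A i) \<and> card (A i) \<le> b"
  shows "finite (\<Union>i\<in>I. A i) \<and> card (\<Union>i\<in>I. A i) \<le> card I * b"
proof -
  have "card (\<Union>i\<in>I. A i) \<le> (\<Sum>i\<in>I. card (A i))" using assms(1) by (rule card_UN_le)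
  also have "\<dots> \<le> (\<Sum>i\<in>I. b)" using assms by (intro sum_mono) auto
  finally show ?thesis using assms by auto
qed

lemma card_UU:
  assumes "finite I" "card I \<le> a"
    and "\<And>j. j \<in> I \<Longrightarrow> finite (A j) \<and> card (A j) \<le> b"
    and "\<And>j i. j \<in> I \<Longrightarrow> i \<in> A j \<Longrightarrow> finite (B i) \<and> card (B i) \<le> c"
  shows "card (\<Union>j\<in>I. \<Union>i\<in>A j. B i) \<le> a * b * c"
proof -
  have "\<And>j. j \<in> I \<Longrightarrow> finite (\<Union>i\<in>A j. B i) \<and> card (\<Union>i\<in>A j. B i) \<le> b * c"
  proof -
    fix j assume j: "j \<in> I"
    have "finite (\<Union>i\<in>A j. B i) \<and> card (\<Union>i\<in>A j. B i) \<le> card (A j) * c"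
      using assms(3)[OF j] assms(4)[OF j] by (intro card_UN_bound) auto
    moreover have "card (A j) * c \<le> b * c" using assms(3)[OF j] by simp
    ultimately show "finite (\<Union>i\<in>A j. B i) \<and> card (\<Union>i\<in>A j. B i) \<le> b * c" by linarith
  qed
  hence "card (\<Union>j\<in>I. \<Union>i\<in>A j. B i) \<le> card I * (b * c)"
    using assms(1) by (intro card_UN_bound[THEN conjunct2]) auto
  also have "\<dots> \<le> a * (b * c)" using assms(2) by simp
  finally show ?thesis by (simp add: mult.assoc)
qed

lemma cover_bound:
  assumes "{1..<L} \<subseteq> X \<union> Y \<union> Z" "finite X" "finite Y" "finite Z"
  shows "L - 1 \<le> card X + card Y + card Z"
proof -
  have "L - 1 = card {1..<L}" by simp
  also have "\<dots> \<le> card (X \<union> Y \<union> Z)" using assms by (intro card_mono) auto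
  also have "\<dots> \<le> card X + card Y + card Z"
    using card_Un_le[of "X \<union> Y" Z] card_Un_le[of X Y] by linarith
  finally show ?thesis .
qed

lemma upper_aux:
  assumes k: "k \<ge> 1" and r: "rc n k L \<le> n"
  shows "L < k + E n"
proof -
  define Os where "Os = {j\<in>{1..<L}. amat n k j}"
  define F where "F = {l\<in>{1..<L}. n + 1 \<le> cc n k l}"
  define B where "B = (\<Union>j\<in>{l. amat n k l}. \<Union>i\<in>{i. amat n i j}. {l. amat n i l})"
  have sub: "{1..<L} \<subseteq> Os \<union> F \<union> B"
  proof
    fix l assume l: "l \<in> {1..<L}"
    show "l \<in> Os \<union> F \<union> B"
    proof (rule ccontr)
      assume nl: "l \<notin> Os \<union> F \<union> B"
      hence na: "\<not> amat n k l" and c: "cc n k l < n + 1" using l by (auto simp: Os_def F_def)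
      have "rc n k l \<le> rc n k L" using l by (intro rc_mono) auto
      hence "\<exists>i\<in>{1..<k}. \<exists>j\<in>{1..<l}. amat n i j \<and> amat n i l \<and> amat n k j"
        using na c r k l amat_eq[of n k l] by auto
      hence "l \<in> B" unfolding B_def by blast
      thus False using nl by blast
    qed
  qed
  have cO: "card Os \<le> n" using r by (simp add: rc_card Os_def)
  have "(n+1) * card F = (\<Sum>l\<in>F. n + 1)" by simp
  also have "\<dots> \<le> (\<Sum>l\<in>F. cc n k l)" by (rule sum_mono) (simp add: F_def)
  also have "\<dots> \<le> (\<Sum>l\<in>{1..<L}. cc n k l)" by (rule sum_mono2) (auto simp: F_def)
  also have "\<dots> = (\<Sum>i\<in>{1..<k}. rc n i L)" unfolding cc_def rc_def by (rule sum.swap)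
  also have "\<dots> \<le> (\<Sum>i\<in>{1..<k}. n + 1)" by (rule sum_mono) (rule rc_le)
  also have "\<dots> = (n+1) * (k - 1)" by simp
  finally have cF: "card F \<le> k - 1" by (metis mult_le_cancel1 add_gr_0 zero_less_one)
  have cB: "card B \<le> (n+1) * (n+1) * (n+1)" unfolding B_def
    by (rule card_UU) (use row_fin col_fin in auto)
  have "L - 1 \<le> card Os + card F + card B"
    by (rule cover_bound[OF sub]) (auto simp: Os_def F_def B_def intro!: finite_UN_I row_fin[THEN conjunct1] col_fin[THEN conjunct1])
  thus ?thesis using cO cF cB k unfolding E_def by (simp add: power3_eq_cube)
qed

lemma lower_aux:
  assumes l: "l \<ge> 1" and r: "cc n K l \<le> n"
  shows "K < l + E n"
proof -
  define Os where "Os = {i\<in>{1..<K}. amat n i l}"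
  define F where "F = {k\<in>{1..<K}. n + 1 \<le> rc n k l}"
  define B where "B = (\<Union>i\<in>{i. amat n i l}. \<Union>j\<in>{j. amat n i j}. {k. amat n k j})"
  have sub: "{1..<K} \<subseteq> Os \<union> F \<union> B"
  proof
    fix k assume k: "k \<in> {1..<K}"
    show "k \<in> Os \<union> F \<union> B"
    proof (rule ccontr)
      assume nl: "k \<notin> Os \<union> F \<union> B"
      hence na: "\<not> amat n k l" and c: "rc n k l < n + 1" using k by (auto simp: Os_def F_def)
      have "cc n k l \<le> cc n K l" using k by (intro cc_mono) auto
      hence "\<exists>i\<in>{1..<k}. \<exists>j\<in>{1..<l}. amat n i j \<and> amat n i l \<and> amat n k j"
        using na c r k l amat_eq[of n k l] by auto
      hence "k \<in> B" unfolding B_def by blast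
      thus False using nl by blast
    qed
  qed
  have cO: "card Os \<le> n" using r by (simp add: cc_card Os_def)
  have "(n+1) * card F = (\<Sum>l\<in>F. n + 1)" by simp
  also have "\<dots> \<le> (\<Sum>k\<in>F. rc n k l)" by (rule sum_mono) (simp add: F_def)
  also have "\<dots> \<le> (\<Sum>k\<in>{1..<K}. rc n k l)" by (rule sum_mono2) (auto simp: F_def)
  also have "\<dots> = (\<Sum>j\<in>{1..<l}. cc n K j)" unfolding cc_def rc_def by (rule sum.swap)
  also have "\<dots> \<le> (\<Sum>j\<in>{1..<l}. n + 1)" by (rule sum_mono) (rule cc_le)
  also have "\<dots> = (n+1) * (l - 1)" by simp
  finally have cF: "card F \<le> l - 1" by (metis mult_le_cancel1 add_gr_0 zero_less_one)
  have cB: "card B \<le> (n+1) * (n+1) * (n+1)" unfolding B_def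
    by (rule card_UU) (use row_fin col_fin in auto)
  have "K - 1 \<le> card Os + card F + card B"
    by (rule cover_bound[OF sub]) (auto simp: Os_def F_def B_def intro!: finite_UN_I row_fin[THEN conjunct1] col_fin[THEN conjunct1])
  thus ?thesis using cO cF cB l unfolding E_def by (simp add: power3_eq_cube)
qed

lemma band: "amat n k l \<Longrightarrow> l < k + E n \<and> k < l + E n"
proof -
  assume a: "amat n k l"
  have "rc n k l < n + 1" "cc n k l < n + 1" "k \<ge> 1" "l \<ge> 1"
    using a amat_eq[of n k l] by auto
  thus ?thesis using upper_aux[of k n l] lower_aux[of l n k] by auto
qed

lemma col_full: "l \<ge> 1 \<Longrightarrow> card {k. amat n k l} = n + 1"
proof -
  assume l: "l \<ge> 1"
  have "\<not> cc n (l + E n) l \<le> n" using lower_aux[OF l, of n "l + E n"] by auto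
  hence "cc n (l + E n) l = n + 1" using cc_le[of n "l + E n" l] by simp
  moreover have "{i\<in>{1..<l + E n}. amat n i l} = {k. amat n k l}"
    using band[of n _ l] amat_pos[of n _ l] by auto
  ultimately show ?thesis by (simp add: cc_card)
qed



lemma row_step:
  assumes kW: "k \<ge> 2 * E n"
    and H: "\<And>i j. k + 1 - 2 * E n \<le> i \<Longrightarrow> i \<le> k \<Longrightarrow> j \<ge> 1 \<Longrightarrow> amat n i j = amat n (i+q) (j+q)"
  shows "l \<ge> 1 \<Longrightarrow> amat n (k+1) l = amat n (k+1+q) (l+q)"
proof (induction l rule: less_induct)
  case (less l)
  note IH = less.IH and l1 = less.prems
  show ?case
  proof (cases "l + E n \<le> k + 1")
    case True
    thus ?thesis using band[of n "k+1" l] band[of n "k+1+q" "l+q"] by auto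
  next
    case False
    hence lk: "k + 1 < l + E n" by simp
    have a: "rc n (k+1) l = rc n (k+1+q) (l+q)"
    proof -
      define f where "f j = (if amat n (k+1+q) j then (1::nat) else 0)" for j
      have "rc n (k+1+q) (l+q) = sum f {1..<q+1} + sum f {q+1..<l+q}"
        unfolding rc_def f_def using l1 by (intro sum.atLeastLessThan_concat[symmetric]) auto
      moreover have "sum f {1..<q+1} = 0"
      proof (rule sum.neutral, rule ballI)
        fix j assume "j \<in> {1..<q+1}"
        thus "f j = 0" using band[of n "k+1+q" j] kW unfolding f_def by auto
      qed
      moreover have "sum f {q+1..<l+q} = sum (\<lambda>j. f (j+q)) {1..<l}"
        using sum.shift_bounds_nat_ivl[of f 1 q l] by (simp add: add.commute)
      moreover have "sum (\<lambda>j. f (j+q)) {1..<l} = rc n (k+1) l"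
        unfolding rc_def f_def by (rule sum.cong) (use IH in auto)
      ultimately show ?thesis by simp
    qed
    have b: "cc n (k+1) l = cc n (k+1+q) (l+q)"
    proof -
      define g where "g i = (if amat n i l then (1::nat) else 0)" for i
      define h where "h i = (if amat n i (l+q) then (1::nat) else 0)" for i
      have "cc n (k+1) l = sum g {1..<k+1-2*E n} + sum g {k+1-2*E n..<k+1}"
        unfolding cc_def g_def using kW by (intro sum.atLeastLessThan_concat[symmetric]) auto
      moreover have "sum g {1..<k+1-2*E n} = 0"
      proof (rule sum.neutral, rule ballI)
        fix i assume "i \<in> {1..<k+1-2*E n}"
        thus "g i = 0" using band[of n i l] lk unfolding g_def by auto
      qed
      moreover have "cc n (k+1+q) (l+q) = sum h {1..<k+1-2*E n+q} + sum h {k+1-2*E n+q..<k+1+q}"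
        unfolding cc_def h_def using kW by (intro sum.atLeastLessThan_concat[symmetric]) auto
      moreover have "sum h {1..<k+1-2*E n+q} = 0"
      proof (rule sum.neutral, rule ballI)
        fix i assume "i \<in> {1..<k+1-2*E n+q}"
        thus "h i = 0" using band[of n i "l+q"] lk kW unfolding h_def by auto
      qed
      moreover have "sum h {k+1-2*E n+q..<k+1+q} = sum (\<lambda>i. h (i+q)) {k+1-2*E n..<k+1}"
        using sum.shift_bounds_nat_ivl[of h "k+1-2*E n" q "k+1"] by simp
      moreover have "sum (\<lambda>i. h (i+q)) {k+1-2*E n..<k+1} = sum g {k+1-2*E n..<k+1}"
        unfolding g_def h_def by (rule sum.cong) (use H l1 in auto)
      ultimately show ?thesis by simp
    qed
    have c: "(\<exists>i\<in>{1..<k+1}. \<exists>j\<in>{1..<l}. amat n i j \<and> amat n i l \<and> amat n (k+1) j)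
       = (\<exists>i\<in>{1..<k+1+q}. \<exists>j\<in>{1..<l+q}. amat n i j \<and> amat n i (l+q) \<and> amat n (k+1+q) j)"
    proof
      assume "\<exists>i\<in>{1..<k+1}. \<exists>j\<in>{1..<l}. amat n i j \<and> amat n i l \<and> amat n (k+1) j"
      then obtain i j where ij: "i\<in>{1..<k+1}" "j\<in>{1..<l}" "amat n i j" "amat n i l" "amat n (k+1) j"
        by blast
      have iw: "k + 1 - 2 * E n \<le> i" using band[of n i l] lk ij(4) by auto
      have "amat n (i+q) (j+q)" "amat n (i+q) (l+q)" using H[OF iw] ij l1 by auto
      moreover have "amat n (k+1+q) (j+q)" using IH[of j] ij by auto
      ultimately show "\<exists>i\<in>{1..<k+1+q}. \<exists>j\<in>{1..<l+q}. amat n i j \<and> amat n i (l+q) \<and> amat n (k+1+q) j"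
        using ij by (intro bexI[of _ "i+q"] bexI[of _ "j+q"]) auto
    next
      assume "\<exists>i\<in>{1..<k+1+q}. \<exists>j\<in>{1..<l+q}. amat n i j \<and> amat n i (l+q) \<and> amat n (k+1+q) j"
      then obtain i' j' where ij: "i'\<in>{1..<k+1+q}" "j'\<in>{1..<l+q}" "amat n i' j'" "amat n i' (l+q)" "amat n (k+1+q) j'"
        by blast
      have jq: "j' > q" using band[of n "k+1+q" j'] ij kW by auto
      have iq: "i' \<ge> k + 1 - 2 * E n + q" using band[of n i' "l+q"] lk ij kW by auto
      define i where "i = i' - q"
      define j where "j = j' - q"
      have i': "i' = i + q" and j': "j' = j + q" using jq iq kW by (auto simp: i_def j_def)
      have iw: "k + 1 - 2 * E n \<le> i" "i \<le> k" using iq ij by (auto simp: i_def)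
      have j1: "j \<ge> 1" "j < l" using jq ij by (auto simp: j_def)
      have "amat n i j" "amat n i l" using H[OF iw] ij j1 l1 i' j' by auto
      moreover have "amat n (k+1) j" using IH[of j] ij j1 j' by auto
      moreover have "i \<ge> 1" using iw kW by auto
      ultimately show "\<exists>i\<in>{1..<k+1}. \<exists>j\<in>{1..<l}. amat n i j \<and> amat n i l \<and> amat n (k+1) j"
        using iw j1 by (intro bexI[of _ i] bexI[of _ j]) auto
    qed
    show ?thesis
      using a b c l1 by (subst amat_eq, subst (2) amat_eq) simp
  qed
qed



lemma propagate:
  assumes kW: "k \<ge> 2 * E n"
    and H: "\<And>i j. k + 1 - 2 * E n \<le> i \<Longrightarrow> i \<le> k \<Longrightarrow> j \<ge> 1 \<Longrightarrow> amat n i j = amat n (i+q) (j+q)"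
  shows "\<And>i j. k + 1 - 2 * E n \<le> i \<Longrightarrow> j \<ge> 1 \<Longrightarrow> amat n i j = amat n (i+q) (j+q)"
proof -
  have G: "\<forall>i j. k + t + 1 - 2 * E n \<le> i \<longrightarrow> i \<le> k + t \<longrightarrow> j \<ge> 1 \<longrightarrow> amat n i j = amat n (i+q) (j+q)" for t
  proof (induction t)
    case 0 thus ?case using H by simp
  next
    case (Suc t)
    show ?case
    proof (intro allI impI)
      fix i j :: nat assume i1: "k + Suc t + 1 - 2 * E n \<le> i" and i2: "i \<le> k + Suc t" and j: "1 \<le> j"
      show "amat n i j = amat n (i+q) (j+q)"
      proof (cases "i \<le> k + t")
        case True thus ?thesis using Suc.IH i1 j by auto
      next
        case False
        hence "i = (k+t) + 1" using i2 by simp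
        moreover have HH: "\<And>i j. k + t + 1 - 2 * E n \<le> i \<Longrightarrow> i \<le> k + t \<Longrightarrow> j \<ge> 1 \<Longrightarrow> amat n i j = amat n (i+q) (j+q)"
          using Suc.IH by blast
        moreover have "amat n ((k+t)+1) j = amat n ((k+t)+1+q) (j+q)"
          using row_step[of n "k+t" q j, OF _ HH j] kW by simp
        ultimately show ?thesis by simp
      qed
    qed
  qed
  fix i j :: nat assume "k + 1 - 2 * E n \<le> i" "j \<ge> 1"
  thus "amat n i j = amat n (i+q) (j+q)"
  proof (cases "i \<le> k")
    case True thus ?thesis using G[of 0] \<open>k + 1 - 2 * E n \<le> i\<close> \<open>j \<ge> 1\<close> by simp
  next
    case False
    have "E n \<ge> 1" by (simp add: E_def)
    hence "i + 1 - 2 * E n \<le> i" by simp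
    thus ?thesis using G[of "i - k"] False \<open>j \<ge> 1\<close> by simp
  qed
qed

definition St :: "nat \<Rightarrow> nat \<Rightarrow> (nat \<times> nat) set" where
  "St n k = {(d,e). d < 2 * E n \<and> e < 2 * E n \<and> amat n (k-d) (k-d+e+1-E n)}"

lemma St_eq:
  assumes k: "k \<ge> 3 * E n" and kk: "k < k'" and S: "St n k = St n k'"
  shows "\<And>i j. k + 1 - 2 * E n \<le> i \<Longrightarrow> i \<le> k \<Longrightarrow> j \<ge> 1 \<Longrightarrow> amat n i j = amat n (i+(k'-k)) (j+(k'-k))"
proof -
  fix i j :: nat assume i1: "k + 1 - 2 * E n \<le> i" and i2: "i \<le> k" and j: "j \<ge> 1"
  define q where "q = k' - k"
  show "amat n i j = amat n (i+(k'-k)) (j+(k'-k))"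
  proof (cases "j < i + E n \<and> i < j + E n")
    case False
    thus ?thesis using band[of n i j] band[of n "i + (k'-k)" "j + (k'-k)"] by auto
  next
    case True
    define d where "d = k - i"
    define e where "e = j + E n - 1 - i"
    have de: "d < 2 * E n" "e < 2 * E n" using True i1 i2 k by (auto simp: d_def e_def)
    have r1: "k - d = i" "k - d + e + 1 - E n = j" using True i2 j by (auto simp: d_def e_def)
    have r2: "k' - d = i + (k'-k)" "k' - d + e + 1 - E n = j + (k'-k)" using True i2 j kk by (auto simp: d_def e_def)
    have "amat n i j = ((d,e) \<in> St n k)" using de r1 by (simp add: St_def)
    also have "\<dots> = ((d,e) \<in> St n k')" using S by simp
    also have "\<dots> = amat n (i+(k'-k)) (j+(k'-k))" using de r2 by (simp add: St_def)
    finally show ?thesis .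
  qed
qed

lemma exists_period: "\<exists>q. q \<ge> 1 \<and> (\<exists>c. \<forall>i>c. \<forall>j\<ge>1. amat n (i+q) (j+q) = amat n i j)"
proof -
  have "\<not> inj_on (St n) {3 * E n..}"
  proof
    assume inj: "inj_on (St n) {3 * E n..}"
    have "St n ` {3 * E n..} \<subseteq> Pow ({..<2 * E n} \<times> {..<2 * E n})"
      by (auto simp: St_def)
    hence "finite (St n ` {3 * E n..})" by (rule finite_subset) simp
    hence "finite {3 * E n..}" using inj by (rule finite_imageD)
    thus False using infinite_Ici by blast
  qed
  then obtain k1 k2 where k: "k1 \<ge> 3 * E n" "k2 \<ge> 3 * E n" "k1 \<noteq> k2" "St n k1 = St n k2"
    unfolding inj_on_def by auto
  obtain k k' where kk: "k \<ge> 3 * E n" "k < k'" "St n k = St n k'"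
    using k by (metis linorder_neq_iff)
  have P: "\<And>i j. k + 1 - 2 * E n \<le> i \<Longrightarrow> j \<ge> 1 \<Longrightarrow> amat n i j = amat n (i+(k'-k)) (j+(k'-k))"
    by (rule propagate) (use kk St_eq[OF kk] in auto)
  show ?thesis
  proof (intro exI conjI allI impI)
    show "1 \<le> k' - k" using kk by simp
    fix i j :: nat assume "k - 2 * E n < i" "1 \<le> j"
    thus "amat n (i + (k'-k)) (j + (k'-k)) = amat n i j" using P[of i j] kk by auto
  qed
qed

lemma per_prop: "per n \<ge> 1 \<and> (\<exists>c. \<forall>i>c. \<forall>j\<ge>1. amat n (i + per n) (j + per n) = amat n i j)"
  unfolding per_def by (rule LeastI_ex) (rule exists_period)

lemma preper_prop: "\<forall>i>preper n. \<forall>j\<ge>1. amat n (i + per n) (j + per n) = amat n i j"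
  unfolding preper_def by (rule LeastI_ex) (use per_prop in blast)

lemma periodic_mult: "i > preper n \<Longrightarrow> j \<ge> 1 \<Longrightarrow> amat n (i + t * per n) (j + t * per n) = amat n i j"
proof (induction t)
  case 0 thus ?case by simp
next
  case (Suc t)
  have "amat n (i + Suc t * per n) (j + Suc t * per n)
      = amat n ((i + t * per n) + per n) ((j + t * per n) + per n)" by (simp add: algebra_simps)
  also have "\<dots> = amat n (i + t * per n) (j + t * per n)"
    using preper_prop[of n] Suc.prems by auto
  finally show ?case using Suc by simp
qed



lemma main_count:
  fixes P r j v pp N :: nat and a :: "nat \<Rightarrow> nat \<Rightarrow> bool"
  assumes rP: "2*r \<le> P" "P \<le> 2*r+1" and j: "1 \<le> j" "j \<le> P" and v: "v \<ge> pp + P"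
    and per: "\<And>x y. x > pp \<Longrightarrow> y \<ge> 1 \<Longrightarrow> a (x+P) (y+P) = a x y"
    and bw: "\<And>g. a g (v+j) \<Longrightarrow> g > pp \<and> \<bar>int (v+j) - int g\<bar> < int r"
    and full: "card {g. a g (v+j)} = N"
  shows "card {i\<in>{1..P}. (if int i - int r \<le> int j \<and> j \<le> i + r then a (v+i) (v+j)
            else if j > i + r then a (v+i) (v+j-P) else a (v+i) (v+j+P))} = N"
proof -
  define T where "T = {i\<in>{1..P}. (if int i - int r \<le> int j \<and> j \<le> i + r then a (v+i) (v+j)
            else if j > i + r then a (v+i) (v+j-P) else a (v+i) (v+j+P))}"
  define f where "f i = (if int i - int r \<le> int j \<and> j \<le> i + r then v+i
            else if j > i + r then v+i+P else v+i-P)" for i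
  have c1: "(if int i - int r \<le> int j \<and> j \<le> i + r then a (v+i) (v+j)
            else if j > i + r then a (v+i) (v+j-P) else a (v+i) (v+j+P)) = a (f i) (v+j)"
    if i: "i \<in> {1..P}" for i
  proof -
    have A: "a (v+i+P) (v+j) = a (v+i) (v+j-P)"
      using per[of "v+i" "v+j-P"] i j v by auto
    have B: "a (v+i) (v+j+P) = a (v+i-P) (v+j)"
      using per[of "v+i-P" "v+j"] i j v by auto
    show ?thesis unfolding f_def using A B by auto
  qed
  have inj: "inj_on f {1..P}"
    unfolding inj_on_def f_def using v by (auto split: if_splits)
  have img: "f ` T = {g. a g (v+j)}"
  proof
    show "f ` T \<subseteq> {g. a g (v+j)}"
    proof (rule image_subsetI)
      fix i assume "i \<in> T"
      hence i: "i \<in> {1..P}" and "(if int i - int r \<le> int j \<and> j \<le> i + r then a (v+i) (v+j)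
            else if j > i + r then a (v+i) (v+j-P) else a (v+i) (v+j+P))" unfolding T_def by blast+
      thus "f i \<in> {g. a g (v+j)}" using c1[OF i] by simp
    qed
  next
    show "{g. a g (v+j)} \<subseteq> f ` T"
    proof
      fix g assume "g \<in> {g. a g (v+j)}"
      hence ag: "a g (v+j)" by simp
      from bw[OF ag] have gp: "g > pp" and d: "\<bar>int (v+j) - int g\<bar> < int r" by auto
      have "\<exists>i\<in>{1..P}. f i = g"
      proof (cases "g \<le> v")
        case True
        define i where "i = g + P - v"
        have i: "i \<in> {1..P}" "\<not> (int i - int r \<le> int j)" "\<not> j > i + r"
          using True d rP j v gp by (auto simp: i_def)
        hence "f i = g" unfolding f_def using True v by (simp add: i_def)
        thus ?thesis using i by blast
      next
        case False
        show ?thesis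
        proof (cases "g - v \<le> P")
          case True
          define i where "i = g - v"
          have i: "i \<in> {1..P}" "int i - int r \<le> int j \<and> j \<le> i + r"
            using True False d rP j v by (auto simp: i_def)
          hence "f i = g" unfolding f_def using False by (simp add: i_def)
          thus ?thesis using i by blast
        next
          case False2: False
          define i where "i = g - v - P"
          have i: "i \<in> {1..P}" "\<not> (int i - int r \<le> int j \<and> j \<le> i + r)" "j > i + r"
            using False2 False d rP j v by (auto simp: i_def)
          hence "f i = g" unfolding f_def using False False2 by (simp add: i_def)
          thus ?thesis using i by blast
        qed
      qed
      then obtain i where i: "i \<in> {1..P}" "f i = g" by blast
      hence "i \<in> T" using c1[OF i(1)] ag by (simp add: T_def)
      thus "g \<in> f ` T" using i by blast
    qed
  qed
  have "card T = card (f ` T)"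
    by (rule card_image[symmetric]) (rule inj_on_subset[OF inj], auto simp: T_def)
  thus ?thesis using img full by (simp add: T_def)
qed



lemma bw_le:
  assumes "g > preper n" "amat n g c"
  shows "\<bar>int c - int g\<bar> \<le> bwidth n"
proof -
  define X where "X = {\<bar>int j - int i\<bar> | i j. i \<ge> 1 \<and> j \<ge> 1 \<and> amat n i j \<and> i > preper n}"
  have "X \<subseteq> {0..int (E n)}"
  proof
    fix x assume "x \<in> X"
    then obtain i j where "x = \<bar>int j - int i\<bar>" "amat n i j" unfolding X_def by blast
    thus "x \<in> {0..int (E n)}" using band[of n i j] by auto
  qed
  hence fin: "finite X" by (rule finite_subset) simp
  have "\<bar>int c - int g\<bar> \<in> X" unfolding X_def using assms amat_pos[of n g c] by blast
  hence "\<bar>int c - int g\<bar> \<le> Max X" using fin by simp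
  thus ?thesis by (simp add: bwidth_def X_def)
qed

lemma col_late:
  assumes r: "int ((per n * m) div 2) > bwidth n" and c: "c > preper n + per n * m"
    and ag: "amat n g c"
  shows "g > preper n"
proof -
  define p where "p = per n"
  define pp where "pp = preper n"
  define R where "R = (per n * m) div 2"
  define t where "t = pp + E n"
  define c' where "c' = c + t * p"
  have p1: "p \<ge> 1" using per_prop[of n] by (simp add: p_def)
  have Rle: "R \<le> per n * m" by (simp add: R_def)
  have tp: "t \<le> t * p" using p1 by (metis mult_le_mono2 mult.right_neutral)
  have "t \<le> c'" using tp unfolding c'_def by linarith
  hence c'ge: "c' \<ge> pp + E n" by (simp add: t_def)
  have c1: "c \<ge> 1" using c by simp
  have c'1: "c' \<ge> 1" using c1 by (simp add: c'_def)
  define G' where "G' = {h. amat n h c'}"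
  have big: "h > pp + t * p" if h: "h \<in> G'" for h
  proof -
    have ah: "amat n h c'" using h by (simp add: G'_def)
    have hp: "h > pp"
    proof (rule ccontr)
      assume "\<not> h > pp"
      thus False using band[OF ah] c'ge by auto
    qed
    have "\<bar>int c' - int h\<bar> \<le> bwidth n" using bw_le[of n h c'] hp ah by (simp add: pp_def)
    hence "int c' - int h < int R" using r by (simp add: R_def)
    hence "c' < h + R" by linarith
    thus ?thesis using c Rle unfolding c'_def pp_def by linarith
  qed
  define sh where "sh h = h - t * p" for h
  have im: "sh ` G' \<subseteq> {g. amat n g c}"
  proof
    fix x assume "x \<in> sh ` G'"
    then obtain h where h: "h \<in> G'" "x = sh h" by blast
    have "h = x + t * p" "x > pp" using big[OF h(1)] h(2) by (auto simp: sh_def)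
    hence "amat n h c' = amat n x c" using periodic_mult[of n x c t] c1 by (simp add: c'_def p_def pp_def)
    thus "x \<in> {g. amat n g c}" using h(1) by (simp add: G'_def)
  qed
  have inj: "inj_on sh G'"
  proof (rule inj_onI)
    fix x y assume "x \<in> G'" "y \<in> G'" "sh x = sh y"
    thus "x = y" using big[of x] big[of y] unfolding sh_def by linarith
  qed
  have "card (sh ` G') = n + 1"
    using card_image[OF inj] col_full[OF c'1, of n] by (simp add: G'_def)
  moreover have "card {g. amat n g c} = n + 1" using col_full[OF c1] .
  moreover have "finite {g. amat n g c}" using col_fin by blast
  ultimately have "sh ` G' = {g. amat n g c}" by (intro card_subset_eq im) auto
  hence "g \<in> sh ` G'" using ag by simp
  then obtain h where "h \<in> G'" "g = sh h" by blast
  thus ?thesis using big[of h] by (auto simp: sh_def pp_def)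
qed

theorem theorem4p3:
  fixes n m v :: nat
  assumes "n \<ge> 1" and "m \<ge> 1"
    and "int ((per n * m) div 2) > bwidth n"
    and "v \<ge> preper n + per n * m"
  shows "\<forall>j\<in>{1..per n * m}. card {i\<in>{1..per n * m}. Bmat n m v i j} = n + 1"
proof
  fix j assume j: "j \<in> {1..per n * m}"
  have "{i\<in>{1..per n * m}. Bmat n m v i j} =
     {i\<in>{1..per n * m}. (if int i - int (per n * m div 2) \<le> int j \<and> j \<le> i + (per n * m div 2) then amat n (v+i) (v+j)
            else if j > i + (per n * m div 2) then amat n (v+i) (v+j-per n * m) else amat n (v+i) (v+j+per n * m))}"
    by (simp add: Bmat_def Let_def)
  also have "card \<dots> = n + 1"
  proof (rule main_count)
    show "2 * (per n * m div 2) \<le> per n * m" by simp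
    show "per n * m \<le> 2 * (per n * m div 2) + 1" by simp
    show "1 \<le> j" "j \<le> per n * m" using j by auto
    show "v \<ge> preper n + per n * m" using assms(4) .
    show "amat n (x + per n * m) (y + per n * m) = amat n x y" if "x > preper n" "y \<ge> 1" for x y
      using periodic_mult[of n x y m] that by (simp add: mult.commute)
    show "preper n < g \<and> \<bar>int (v+j) - int g\<bar> < int (per n * m div 2)" if "amat n g (v+j)" for g
    proof -
      have "g > preper n" using col_late[OF assms(3) _ that] j assms(4) by auto
      moreover have "\<bar>int (v+j) - int g\<bar> \<le> bwidth n" using bw_le[OF _ that] calculation by simp
      ultimately show ?thesis using assms(3) by simp
    qed
    show "card {g. amat n g (v+j)} = n + 1" by (rule col_full) (use j in auto)
  qed
  finally show "card {i\<in>{1..per n * m}. Bmat n m v i j} = n + 1" .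
qed

end
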